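(* Let $\mathcal{A}=\{A_1,\dots,A_m\}$ be a bimodal collection of pairwise disjoint nonempty subsets of a finite abelian group $G$, with internal difference groups $H_1,\dots,H_m$, such that $|A_1|<|H_1|$ and $|A_i|=|H_i|$ for all $2\le i\le m$. Let $D=H_2+H_3+\dots+H_m$, and suppose $\mathcal{A}$ is in canonical position, i.e. $A_1\subseteq H_1$ and $D\subseteq H_1\setminus A_1$. Then: (1) $A_1\subseteq H_1\setminus D$ and $A_1$ is a union of cosets of $D$; (2) each $A_i$ with $2\le i\le m$ is a coset of $H_i$, and $A_2,\dots,A_m$ arise from a subdivision of cosets of $H_1$, i.e. $A_2\cup\dots\cup A_m$ is a union of cosets of $H_1$ and each $A_i$ ($i\ge2$) is contained in a single coset of $H_1$.
   Context: $G$ is written additively. The internal difference group $H_i$ of $A_i$ is the subgroup generated by all $x-y$ with $x,y\in A_i$; $A_i$ lies in a single coset of $H_i$ and $|A_i|\le|H_i|$. A collection $\{A_1,\dots,A_m\}$ of pairwise disjoint subsets of $G$ is bimodal if for every $i$ and every $\delta\in G\setminus\{0\}$, the number $N_i(\delta)$ of pairs $(a,b)$ with $a\in A_i$, $b\in A_j$ for some $j\neq i$, and $a-b=\delta$, satisfies $N_i(\delta)\in\{0,|A_i|\}$. An empty sum of subgroups is $\{0\}$. *)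

theory Defs
  imports Main
begin

definition is_subgroup :: "'a::ab_group_add set \<Rightarrow> bool" where
  "is_subgroup H \<longleftrightarrow> 0 \<in> H \<and> (\<forall>x\<in>H. \<forall>y\<in>H. x - y \<in> H)"

definition gen_subgroup :: "'a::ab_group_add set \<Rightarrow> 'a set" where
  "gen_subgroup S = \<Inter>{H. is_subgroup H \<and> S \<subseteq> H}"

definition diff_group :: "'a::ab_group_add set \<Rightarrow> 'a set" where
  "diff_group A = gen_subgroup {x - y | x y. x \<in> A \<and> y \<in> A}"

definition subgroup_sum :: "nat set \<Rightarrow> (nat \<Rightarrow> 'a::ab_group_add set) \<Rightarrow> 'a set" where
  "subgroup_sum I H = {(\<Sum>i\<in>I. f i) | f. \<forall>i\<in>I. f i \<in> H i}"

definition coset :: "'a::ab_group_add \<Rightarrow> 'a set \<Rightarrow> 'a set" where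
  "coset x K = (\<lambda>k. x + k) ` K"

definition union_of_cosets :: "'a::ab_group_add set \<Rightarrow> 'a set \<Rightarrow> bool" where
  "union_of_cosets K S \<longleftrightarrow> (\<exists>X. S = (\<Union>x\<in>X. coset x K))"

definition Ncount :: "nat \<Rightarrow> (nat \<Rightarrow> 'a::ab_group_add set) \<Rightarrow> nat \<Rightarrow> 'a \<Rightarrow> nat" where
  "Ncount m A i \<delta> = card {(a, b). a \<in> A i \<and> (\<exists>j\<in>{1..m}. j \<noteq> i \<and> b \<in> A j) \<and> a - b = \<delta>}"

definition bimodal :: "nat \<Rightarrow> (nat \<Rightarrow> 'a::ab_group_add set) \<Rightarrow> bool" where
  "bimodal m A \<longleftrightarrow> (\<forall>i\<in>{1..m}. \<forall>\<delta>. \<delta> \<noteq> 0 \<longrightarrow>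
      Ncount m A i \<delta> = 0 \<or> Ncount m A i \<delta> = card (A i))"

end

theory Submission
  imports Defs
begin

lemma gen_sg: "is_subgroup (gen_subgroup S)"
  unfolding gen_subgroup_def is_subgroup_def by blast

lemma gen_sup: "S \<subseteq> gen_subgroup S"
  unfolding gen_subgroup_def by auto

lemma gen_min: "is_subgroup K \<Longrightarrow> S \<subseteq> K \<Longrightarrow> gen_subgroup S \<subseteq> K"
  unfolding gen_subgroup_def by auto

lemma sg0: "is_subgroup H \<Longrightarrow> (0::'a::ab_group_add) \<in> H"
  unfolding is_subgroup_def by blast
lemma sgdiff: "is_subgroup H \<Longrightarrow> x \<in> H \<Longrightarrow> y \<in> H \<Longrightarrow> (x::'a::ab_group_add) - y \<in> H"
  unfolding is_subgroup_def by blast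
lemma sgneg: "is_subgroup H \<Longrightarrow> x \<in> H \<Longrightarrow> - (x::'a::ab_group_add) \<in> H"
  using sgdiff[of H 0 x] sg0[of H] by simp
lemma sgadd: "is_subgroup H \<Longrightarrow> x \<in> H \<Longrightarrow> y \<in> H \<Longrightarrow> (x::'a::ab_group_add) + y \<in> H"
  using sgdiff[of H x "- y"] sgneg[of H y] by simp

lemma dg_sg: "is_subgroup (diff_group A)"
  unfolding diff_group_def by (rule gen_sg)

lemma dg_diff: "x \<in> A \<Longrightarrow> y \<in> A \<Longrightarrow> x - y \<in> diff_group A"
  unfolding diff_group_def by (rule subsetD[OF gen_sup]) blast

definition Bo :: "nat \<Rightarrow> (nat \<Rightarrow> 'a set) \<Rightarrow> nat \<Rightarrow> 'a set" where
  "Bo m A i = {b. \<exists>j\<in>{1..m}. j \<noteq> i \<and> b \<in> A j}"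

lemma bim_use:
  fixes A :: "nat \<Rightarrow> 'a::ab_group_add set"
  assumes "bimodal m A" "i \<in> {1..m}" "\<delta> \<noteq> 0" "a \<in> A i" "a - \<delta> \<in> Bo m A i" "finite (A i)"
  shows "\<forall>a'\<in>A i. a' - \<delta> \<in> Bo m A i"
proof -
  let ?S = "{a\<in>A i. a - \<delta> \<in> Bo m A i}"
  have eq: "{(a, b). a \<in> A i \<and> (\<exists>j\<in>{1..m}. j \<noteq> i \<and> b \<in> A j) \<and> a - b = \<delta>}
      = (\<lambda>a. (a, a - \<delta>)) ` ?S"
    unfolding Bo_def by (auto simp: algebra_simps image_iff simp del: atLeastAtMost_iff)
  have "inj_on (\<lambda>a. (a, a - \<delta>)) ?S" by (auto simp: inj_on_def)
  hence c: "Ncount m A i \<delta> = card ?S"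
    unfolding Ncount_def eq by (simp add: card_image)
  have fS: "finite ?S" using assms(6) by simp
  have "a \<in> ?S" using assms by auto
  hence "card ?S \<noteq> 0" using fS by auto
  moreover have "Ncount m A i \<delta> = 0 \<or> Ncount m A i \<delta> = card (A i)"
    using assms(1-3) unfolding bimodal_def by blast
  ultimately have "card ?S = card (A i)" using c by simp
  hence "?S = A i" using card_subset_eq[OF assms(6), of ?S] by auto
  thus ?thesis by blast
qed

theorem theorem3p15:
  fixes A H :: "nat \<Rightarrow> 'a::{finite, ab_group_add} set" and m :: nat and D :: "'a set"
  assumes m1: "m \<ge> 1"
    and nonempty: "\<forall>i\<in>{1..m}. A i \<noteq> {}"
    and disjoint: "\<forall>i\<in>{1..m}. \<forall>j\<in>{1..m}. i \<noteq> j \<longrightarrow> A i \<inter> A j = {}"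
    and bim: "bimodal m A"
    and Hdef: "\<forall>i\<in>{1..m}. H i = diff_group (A i)"
    and card1: "card (A 1) < card (H 1)"
    and cardi: "\<forall>i\<in>{2..m}. card (A i) = card (H i)"
    and Ddef: "D = subgroup_sum {2..m} H"
    and canon1: "A 1 \<subseteq> H 1"
    and canon2: "D \<subseteq> H 1 - A 1"
  shows "(A 1 \<subseteq> H 1 - D \<and> union_of_cosets D (A 1)) \<and>
         (\<forall>i\<in>{2..m}. \<exists>x. A i = coset x (H i)) \<and>
         union_of_cosets (H 1) (\<Union>i\<in>{2..m}. A i) \<and>
         (\<forall>i\<in>{2..m}. \<exists>x. A i \<subseteq> coset x (H 1))"
proof -
  have i1: "(1::nat) \<in> {1..m}" using m1 by auto
  have fin: "\<And>X::'a set. finite X" by simp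
  have sgH: "\<And>i. i \<in> {1..m} \<Longrightarrow> is_subgroup (H i)" using Hdef dg_sg by metis
  have sg1: "is_subgroup (H 1)" using sgH i1 .
  have H0: "0 \<in> H j" if "j \<in> {2..m}" for j
  proof -
    have "j \<in> {1..m}" using that by auto
    thus ?thesis using sg0[OF sgH] by blast
  qed
  define B1 where "B1 = Bo m A 1"
  have disj1: "A 1 \<inter> B1 = {}" unfolding B1_def Bo_def using disjoint i1 by blast
  define P where "P t = (\<forall>a\<in>A 1. a + t \<in> B1)" for t
  have bim1: "P t" if "a \<in> A 1" "a + t \<in> B1" "t \<noteq> 0" for a t
    using bim_use[OF bim i1, of "- t" a] that unfolding P_def B1_def by simp
  have step: "P (t + d)" if "P t" "x \<in> A 1" "y \<in> A 1" "d = x - y" for t d x y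
  proof -
    have e: "y + (t + d) = x + t" using that(4) by (simp add: algebra_simps)
    have "x + t \<in> B1" using that(1,2) unfolding P_def by blast
    hence yin: "y + (t + d) \<in> B1" unfolding e .
    have "t + d \<noteq> 0" using yin disj1 that(3) by auto
    thus ?thesis using bim1[OF that(3) yin] by simp
  qed
  define K where "K = {h. \<forall>t. P t = P (t + h)}"
  have sgK: "is_subgroup K" unfolding is_subgroup_def K_def
  proof (intro conjI ballI; simp)
    fix x y assume x: "\<forall>t. P t = P (t + x)" and y: "\<forall>t. P t = P (t + y)"
    show "\<forall>t. P t = P (t + (x - y))"
    proof
      fix t
      have "P (t - y) = P t" using y[rule_format, of "t - y"] by simp
      moreover have "P (t - y) = P (t + (x - y))" using x[rule_format, of "t - y"] by (simp add: algebra_simps)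
      ultimately show "P t = P (t + (x - y))" by simp
    qed
  qed
  have dK: "{x - y | x y. x \<in> A 1 \<and> y \<in> A 1} \<subseteq> K"
  proof
    fix d assume "d \<in> {x - y | x y. x \<in> A 1 \<and> y \<in> A 1}"
    then obtain x y where xy: "x \<in> A 1" "y \<in> A 1" "d = x - y" by blast
    have "P t = P (t + d)" for t
    proof
      assume "P t" thus "P (t + d)" using step xy by blast
    next
      assume "P (t + d)"
      hence "P (t + d + (y - x))" using step xy by blast
      thus "P t" using xy by simp
    qed
    thus "d \<in> K" unfolding K_def by simp
  qed
  have HK: "H 1 \<subseteq> K" using Hdef i1 gen_min[OF sgK dK] unfolding diff_group_def by simp
  obtain a0 where a0: "a0 \<in> A 1" using nonempty i1 by blast
  have nP0: "\<not> P 0" using a0 disj1 unfolding P_def by auto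
  have noB: "\<not> P t" if "t \<in> H 1" for t
  proof
    assume "P t"
    have "- t \<in> K" using HK sgneg[OF sg1 that] by auto
    hence "P (t + - t)" using \<open>P t\<close> unfolding K_def by blast
    thus False using nP0 by simp
  qed
  have BP: "P (b - a)" if "b \<in> B1" "a \<in> A 1" for a b
  proof -
    have "b \<noteq> a" using that disj1 by auto
    thus ?thesis using bim1[OF that(2), of "b - a"] that by simp
  qed
  have BH: "b \<notin> H 1" if "b \<in> B1" for b
    using noB[of "b - a0"] BP[OF that a0] sgdiff[OF sg1, of b a0] canon1 a0 by auto
  have Bcos: "b + h \<in> B1" if "b \<in> B1" "h \<in> H 1" for b h
  proof -
    have "P (b - a0 + h)" using BP[OF that(1) a0] HK that(2) unfolding K_def by blast
    hence "a0 + (b - a0 + h) \<in> B1" using a0 unfolding P_def by blast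
    moreover have "a0 + (b - a0 + h) = b + h" by (simp add: algebra_simps)
    ultimately show ?thesis by simp
  qed
  have cosi: "A i = coset c (H i)" if "i \<in> {2..m}" "c \<in> A i" for i c
  proof -
    have i: "i \<in> {1..m}" using that by auto
    have sub: "A i \<subseteq> coset c (H i)"
    proof
      fix x assume "x \<in> A i"
      hence "x - c \<in> H i" using Hdef i dg_diff that(2) by metis
      thus "x \<in> coset c (H i)" unfolding coset_def by (auto intro!: image_eqI[of _ _ "x - c"])
    qed
    have "card (coset c (H i)) = card (H i)" unfolding coset_def by (simp add: card_image)
    thus ?thesis using card_subset_eq[OF fin sub] cardi that(1) by simp
  qed
  have HD: "H i \<subseteq> D" if "i \<in> {2..m}" for i
  proof
    fix h assume h: "h \<in> H i"
    define f where "f j = (if j = i then h else 0)" for j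
    have "\<forall>j\<in>{2..m}. f j \<in> H j" unfolding f_def using h H0 by auto
    moreover have "sum f {2..m} = h" unfolding f_def using that by simp
    ultimately show "h \<in> D" unfolding Ddef subgroup_sum_def by blast
  qed
  have HH1: "H i \<subseteq> H 1" if "i \<in> {2..m}" for i using HD[OF that] canon2 by auto
  have Ainv: "a + h \<in> A 1" if i: "i \<in> {2..m}" and a: "a \<in> A 1" and h: "h \<in> H i" for i a h
  proof -
    have i': "i \<in> {1..m}" using i by auto
    obtain c where c: "c \<in> A i" using nonempty i' by blast
    have "i \<noteq> 1" using i by auto
    hence "A i \<inter> A 1 = {}" using disjoint i' i1 by blast
    hence "c \<notin> A 1" using c by blast
    hence dn: "c - a \<noteq> 0" using a by auto
    have "a \<in> Bo m A i" unfolding Bo_def mem_Collect_eq using i1 a \<open>i \<noteq> 1\<close> by metis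
    hence all: "\<forall>a'\<in>A i. a' - (c - a) \<in> Bo m A i"
      using bim_use[OF bim i' dn c] by simp
    have "c + h \<in> A i" using cosi[OF i c] h unfolding coset_def by auto
    hence "(c + h) - (c - a) \<in> Bo m A i" using all by blast
    moreover have "(c + h) - (c - a) = a + h" by (simp add: algebra_simps)
    ultimately have "a + h \<in> Bo m A i" by simp
    then obtain j where j: "j \<in> {1..m}" "j \<noteq> i" "a + h \<in> A j" unfolding Bo_def by auto
    have "a + h \<in> H 1" using sgadd[OF sg1] canon1 a HH1[OF i] h by auto
    hence "a + h \<notin> B1" using BH by auto
    show ?thesis
    proof (cases "j = 1")
      case True thus ?thesis using j by simp
    next
      case False
      hence "a + h \<in> B1" unfolding B1_def Bo_def mem_Collect_eq using j by metis
      thus ?thesis using \<open>a + h \<notin> B1\<close> by contradiction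
    qed
  qed
  have Dsum: "finite I \<Longrightarrow> I \<subseteq> {2..m} \<Longrightarrow> (\<forall>i\<in>I. f i \<in> H i) \<Longrightarrow> \<forall>a\<in>A 1. a + sum f I \<in> A 1" for I f
  proof (induction I rule: finite_induct)
    case empty thus ?case by simp
  next
    case (insert x F)
    show ?case
    proof
      fix a assume a: "a \<in> A 1"
      have "a + f x \<in> A 1" using Ainv[OF _ a, of x "f x"] insert by auto
      hence "a + f x + sum f F \<in> A 1" using insert by auto
      thus "a + sum f (insert x F) \<in> A 1" using insert by (simp add: algebra_simps)
    qed
  qed
  have Dinv: "a + d \<in> A 1" if "a \<in> A 1" "d \<in> D" for a d
    using that Dsum[of "{2..m}"] unfolding Ddef subgroup_sum_def by auto
  have D0: "0 \<in> D"
  proof -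
    have "\<forall>j\<in>{2..m}. (\<lambda>_. 0) j \<in> H j" using H0 by auto
    thus ?thesis unfolding Ddef subgroup_sum_def by force
  qed
  have c1: "A 1 \<subseteq> H 1 - D" using canon1 canon2 by auto
  have c2: "union_of_cosets D (A 1)" unfolding union_of_cosets_def
  proof (intro exI[of _ "A 1"] equalityI subsetI)
    fix x assume "x \<in> A 1"
    thus "x \<in> (\<Union>x\<in>A 1. coset x D)" unfolding coset_def using D0 by force
  next
    fix x assume "x \<in> (\<Union>x\<in>A 1. coset x D)"
    thus "x \<in> A 1" unfolding coset_def using Dinv by auto
  qed
  have c3: "\<forall>i\<in>{2..m}. \<exists>x. A i = coset x (H i)"
  proof
    fix i assume i: "i \<in> {2..m}"
    then obtain c where "c \<in> A i" using nonempty by fastforce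
    thus "\<exists>x. A i = coset x (H i)" using cosi i by blast
  qed
  have BU: "(\<Union>i\<in>{2..m}. A i) = B1"
  proof (intro equalityI subsetI)
    fix x assume "x \<in> (\<Union>i\<in>{2..m}. A i)"
    then obtain i where "i \<in> {2..m}" "x \<in> A i" by blast
    moreover hence "i \<in> {1..m}" "i \<noteq> 1" by auto
    ultimately show "x \<in> B1" unfolding B1_def Bo_def mem_Collect_eq by metis
  next
    fix x assume "x \<in> B1"
    then obtain j where "j \<in> {1..m}" "j \<noteq> 1" "x \<in> A j" unfolding B1_def Bo_def by blast
    moreover hence "j \<in> {2..m}" by auto
    ultimately show "x \<in> (\<Union>i\<in>{2..m}. A i)" by blast
  qed
  have c4: "union_of_cosets (H 1) (\<Union>i\<in>{2..m}. A i)" unfolding union_of_cosets_def BU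
  proof (intro exI[of _ B1] equalityI subsetI)
    fix x assume "x \<in> B1"
    thus "x \<in> (\<Union>x\<in>B1. coset x (H 1))" unfolding coset_def using sg0[OF sg1] by force
  next
    fix x assume "x \<in> (\<Union>x\<in>B1. coset x (H 1))"
    thus "x \<in> B1" unfolding coset_def using Bcos by auto
  qed
  have c5: "\<forall>i\<in>{2..m}. \<exists>x. A i \<subseteq> coset x (H 1)"
  proof
    fix i assume i: "i \<in> {2..m}"
    then obtain c where c: "c \<in> A i" using nonempty by fastforce
    have "A i \<subseteq> coset c (H 1)" using cosi[OF i c] HH1[OF i] unfolding coset_def by auto
    thus "\<exists>x. A i \<subseteq> coset x (H 1)" by blast
  qed
  show ?thesis using c1 c2 c3 c4 c5 by blast
qed

end
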